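(* Let $\mathcal{G}^0=(\mathcal V,\mathcal E^0)$ be a graph on $\mathcal V=\{1,\dots,N\}$ (not necessarily undirected) and let the packet-loss processes $\{\theta^{ij}_k\}$, $e^{ij}\in\mathcal E^0$, satisfy Assumption A. Then for every $k\ge 0$, $$\mathbb E\big[L_{\sigma_{k+1}}^\top L_{\sigma_{k+1}}\,\big|\,\sigma_k\big]=\mathbb E\big[L_{\sigma_{k+1}}\,\big|\,\sigma_k\big]^\top\,\mathbb E\big[L_{\sigma_{k+1}}\,\big|\,\sigma_k\big]+\mathcal V_k(\mathcal G)+\mathcal V_k(\mathcal G^\top),$$ where conditional expectations of random matrices are taken entrywise and $\mathcal V_k(\mathcal G),\mathcal V_k(\mathcal G^\top)$ are the conditional variance matrices defined in the context.
   Context: Graphs: $\mathcal G=(\mathcal V,\mathcal E)$ with $\mathcal V=\{1,\dots,N\}$, $\mathcal E\subseteq\mathcal V\times\mathcal V$, no self-loops; $e^{ij}:=(i,j)$ is read as an edge pointing from $j$ to $i$. In-neighbourhood $\mathcal N_i^-=\{j:e^{ij}\in\mathcal E\}$, out-neighbourhood $\mathcal N_i^+=\{j:e^{ji}\in\mathcal E\}$. The transposed graph $\mathcal G^\top$ has edge set $\{e^{ij}:e^{ji}\in\mathcal E\}$. The Laplacian $L(\mathcal G)=[l_{ij}]\in\mathbb Z^{N\times N}$ has $l_{ij}=-1$ if $i\neq j$ and $e^{ij}\in\mathcal E$, $l_{ij}=0$ if $i\ne j$ and $e^{ij}\notin\mathcal E$, and $l_{ii}=-\sum_{l\neq i}l_{il}$.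 Packet loss: for each $e^{ij}\in\mathcal E^0$ there is a $\{0,1\}$-valued process $\{\theta^{ij}_k\}_{k\ge0}$ ($1$ = successful transmission on $e^{ij}$ at time $k$). Let $\sigma_k:=(\theta^{ij}_k)_{e^{ij}\in\mathcal E^0}$ denote the joint state, $\mathcal G_{\sigma_k}:=(\mathcal V,\{e^{ij}\in\mathcal E^0:\theta^{ij}_k=1\})$, $L_{\sigma_k}:=L(\mathcal G_{\sigma_k})$, $L^0:=L(\mathcal G^0)$. Assumption A: there are numbers $p^{ij},q^{ij},\eta^{ij}\in[0,1]$ such that $\mathbb P(\theta^{ij}_0=1)=\eta^{ij}$; $\{\sigma_k\}$ is a Markov chain and, conditionally on $\sigma_k$, $\theta^{ij}_{k+1}=1$ with probability $p^{ij}$ if $\theta^{ij}_k=1$ and with probability $q^{ij}$ if $\theta^{ij}_k=0$; and the processes associated with distinct unordered pairs of vertices (i.e. $\theta^{ij}$ and $\theta^{rs}$ whenever $e^{rs}\notin\{e^{ij},e^{ji}\}$) are mutually independent. Conditional variance matrices: set $v^{ij}_k:=\operatorname{Var}[\theta^{ij}_{k+1}\mid\sigma_k]$ for $e^{ij}\in\mathcal E^0$ ($=\alpha(1-\alpha)$ with $\alpha=\mathbb E[\theta^{ij}_{k+1}\mid\sigma_k]$). $\mathcal V_k(\mathcal G)$ is the $N\times N$ matrix with off-diagonal entries $-v^{ij}_k$ if $e^{ij}\in\mathcal E^0$ and $0$ otherwise, and diagonal entries $\sum_{r\in\mathcal N_i^-}v^{ir}_k$ (the conditional variance of the $i$-th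 diagonal entry of $L(\mathcal G_{\sigma_{k+1}})$); $\mathcal V_k(\mathcal G^\top)$ is the analogous matrix for the transposed graph, i.e. off-diagonal $(i,j)$ entry $-v^{ji}_k$ if $e^{ji}\in\mathcal E^0$, else $0$, and diagonal entries $\sum_{s\in\mathcal N_i^+}v^{si}_k$ (neighbourhoods w.r.t. $\mathcal G^0$). (These are the weighted Laplacians of $\mathcal G^0$ and $(\mathcal G^0)^\top$ with edge weights $v^{ij}_k$.) *)

theory Defs
  imports "HOL-Probability.Probability"
begin

text \<open>Matrices are functions nat => nat => real, indexed over the vertex set {1..N}.\<close>

definition mtrans :: "(nat \<Rightarrow> nat \<Rightarrow> real) \<Rightarrow> nat \<Rightarrow> nat \<Rightarrow> real" where
  "mtrans A i j = A j i"

definition mmult :: "nat \<Rightarrow> (nat \<Rightarrow> nat \<Rightarrow> real) \<Rightarrow> (nat \<Rightarrow> nat \<Rightarrow> real) \<Rightarrow> nat \<Rightarrow> nat \<Rightarrow> real" where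
  "mmult N A B i j = (\<Sum>l\<in>{1..N}. A i l * B l j)"

text \<open>Laplacian of the graph ({1..N}, E); (i,j) in E is the edge from j to i.\<close>
definition laplacian :: "nat \<Rightarrow> (nat \<times> nat) set \<Rightarrow> nat \<Rightarrow> nat \<Rightarrow> real" where
  "laplacian N E i j =
     (if i = j then real (card {l \<in> {1..N}. l \<noteq> i \<and> (i, l) \<in> E})
      else if (i, j) \<in> E then -1 else 0)"

definition edge_state :: "(nat \<times> nat) set \<Rightarrow> (nat \<times> nat \<Rightarrow> nat \<Rightarrow> 'a \<Rightarrow> real) \<Rightarrow> nat \<Rightarrow> 'a \<Rightarrow> (nat \<times> nat \<Rightarrow> real)" where
  "edge_state E0 \<theta> k \<omega> = (\<lambda>e. if e \<in> E0 then \<theta> e k \<omega> else 0)"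

definition rand_edges :: "(nat \<times> nat) set \<Rightarrow> (nat \<times> nat \<Rightarrow> nat \<Rightarrow> 'a \<Rightarrow> real) \<Rightarrow> nat \<Rightarrow> 'a \<Rightarrow> (nat \<times> nat) set" where
  "rand_edges E0 \<theta> k \<omega> = {e \<in> E0. \<theta> e k \<omega> = 1}"

definition state_event :: "'a measure \<Rightarrow> (nat \<times> nat) set \<Rightarrow> (nat \<times> nat \<Rightarrow> nat \<Rightarrow> 'a \<Rightarrow> real) \<Rightarrow> nat \<Rightarrow> (nat \<times> nat \<Rightarrow> real) \<Rightarrow> 'a set" where
  "state_event M E0 \<theta> k s = {\<omega> \<in> space M. edge_state E0 \<theta> k \<omega> = s}"

text \<open>Since sigma_k takes finitely many values, E[X | sigma_k] on {sigma_k = s}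
  (with P(sigma_k = s) > 0) equals this quantity with A = {sigma_k = s}.\<close>
definition cexp :: "'a measure \<Rightarrow> ('a \<Rightarrow> real) \<Rightarrow> 'a set \<Rightarrow> real" where
  "cexp M X A = (\<integral>\<omega>. indicator A \<omega> * X \<omega> \<partial>M) / measure M A"

definition cond_var_edge :: "'a measure \<Rightarrow> (nat \<times> nat) set \<Rightarrow> (nat \<times> nat \<Rightarrow> nat \<Rightarrow> 'a \<Rightarrow> real) \<Rightarrow> nat \<Rightarrow> (nat \<times> nat \<Rightarrow> real) \<Rightarrow> nat \<times> nat \<Rightarrow> real" where
  "cond_var_edge M E0 \<theta> k s e =
     (let \<alpha> = cexp M (\<theta> e (Suc k)) (state_event M E0 \<theta> k s) in \<alpha> * (1 - \<alpha>))"

definition var_mat :: "nat \<Rightarrow> (nat \<times> nat) set \<Rightarrow> (nat \<times> nat \<Rightarrow> real) \<Rightarrow> nat \<Rightarrow> nat \<Rightarrow> real" where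
  "var_mat N E0 v i j =
     (if i = j then (\<Sum>r\<in>{r \<in> {1..N}. (i, r) \<in> E0}. v (i, r))
      else if (i, j) \<in> E0 then - v (i, j) else 0)"

definition var_mat_transp :: "nat \<Rightarrow> (nat \<times> nat) set \<Rightarrow> (nat \<times> nat \<Rightarrow> real) \<Rightarrow> nat \<Rightarrow> nat \<Rightarrow> real" where
  "var_mat_transp N E0 v i j =
     (if i = j then (\<Sum>s\<in>{s \<in> {1..N}. (s, i) \<in> E0}. v (s, i))
      else if (j, i) \<in> E0 then - v (j, i) else 0)"

end

theory Submission
  imports Defs
begin


definition ww :: "nat \<Rightarrow> nat \<Rightarrow> nat \<times> nat \<Rightarrow> real" where
 "ww l a e = (if l = a \<and> fst e = a then 1 else 0) - (if e = (l, a) then 1 else 0)"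

definition WW :: "nat \<Rightarrow> nat \<Rightarrow> nat \<Rightarrow> nat \<times> nat \<Rightarrow> nat \<times> nat \<Rightarrow> real" where
 "WW N a b e f = (\<Sum>l\<in>{1..N}. ww l a e * ww l b f)"

lemma ww_zero: "fst e \<noteq> l \<Longrightarrow> ww l a e = 0"
  unfolding ww_def by (cases e) auto

lemma WW_diff: assumes "fst e \<noteq> fst f" shows "WW N a b e f = 0"
  unfolding WW_def
proof (rule sum.neutral, rule ballI)
  fix l
  show "ww l a e * ww l b f = 0"
  proof (cases "fst e = l")
    case True then have "fst f \<noteq> l" using assms by simp
    then show ?thesis by (simp add: ww_zero)
  next
    case False then show ?thesis by (simp add: ww_zero)
  qed
qed

lemma WW_diag:
  assumes "fst e \<in> {1..N}" "fst e \<noteq> snd e"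
  shows "WW N a b e e = ((if fst e = a then 1 else 0) - (if snd e = a then 1 else 0))
                       * ((if fst e = b then 1 else 0) - (if snd e = b then 1 else 0))"
proof -
  have *: "ww l a e * ww l b e = (if fst e = l then ww (fst e) a e * ww (fst e) b e else 0)" for l
    by (cases "fst e = l") (simp_all add: ww_zero)
  have "WW N a b e e = (\<Sum>l\<in>{1..N}. (if fst e = l then ww (fst e) a e * ww (fst e) b e else 0))"
    unfolding WW_def by (rule sum.cong[OF refl], rule *)
  also have "\<dots> = ww (fst e) a e * ww (fst e) b e"
    using assms(1) by (simp add: sum.delta')
  finally show ?thesis by (cases e) (simp add: ww_def)
qed

lemma rearr:
  fixes x y :: "nat \<times> nat \<Rightarrow> real"
  shows "(\<Sum>l\<in>{1..N}. (\<Sum>e\<in>E. ww l a e * x e) * (\<Sum>f\<in>E. ww l b f * y f))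
       = (\<Sum>e\<in>E. \<Sum>f\<in>E. WW N a b e f * (x e * y f))"
proof -
  have "(\<Sum>l\<in>{1..N}. (\<Sum>e\<in>E. ww l a e * x e) * (\<Sum>f\<in>E. ww l b f * y f))
     = (\<Sum>l\<in>{1..N}. \<Sum>e\<in>E. \<Sum>f\<in>E. ww l a e * ww l b f * (x e * y f))"
    by (simp add: sum_product algebra_simps)
  also have "\<dots> = (\<Sum>e\<in>E. \<Sum>l\<in>{1..N}. \<Sum>f\<in>E. ww l a e * ww l b f * (x e * y f))"
    by (rule sum.swap)
  also have "\<dots> = (\<Sum>e\<in>E. \<Sum>f\<in>E. \<Sum>l\<in>{1..N}. ww l a e * ww l b f * (x e * y f))"
    by (rule sum.cong[OF refl], rule sum.swap)
  also have "\<dots> = (\<Sum>e\<in>E. \<Sum>f\<in>E. WW N a b e f * (x e * y f))"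
    by (simp add: WW_def sum_distrib_right)
  finally show ?thesis .
qed

lemma ALG:
  fixes m1 :: "nat \<times> nat \<Rightarrow> real" and m2 :: "nat \<times> nat \<Rightarrow> nat \<times> nat \<Rightarrow> real"
  assumes E0_sub: "E0 \<subseteq> {1..N} \<times> {1..N}"
    and no_loops: "\<forall>i. (i, i) \<notin> E0"
    and d: "\<And>e. e \<in> E0 \<Longrightarrow> m2 e e = m1 e"
    and o: "\<And>e f. e \<in> E0 \<Longrightarrow> f \<in> E0 \<Longrightarrow> {fst e, snd e} \<noteq> {fst f, snd f} \<Longrightarrow> m2 e f = m1 e * m1 f"
  shows "(\<Sum>e\<in>E0. \<Sum>f\<in>E0. WW N a b e f * m2 e f)
    = (\<Sum>e\<in>E0. \<Sum>f\<in>E0. WW N a b e f * (m1 e * m1 f))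
      + var_mat N E0 (\<lambda>e. m1 e * (1 - m1 e)) a b + var_mat_transp N E0 (\<lambda>e. m1 e * (1 - m1 e)) a b"
proof -
  define v where "v e = m1 e * (1 - m1 e)" for e
  have fin: "finite E0" using E0_sub finite_subset by blast
  have inner: "(\<Sum>f\<in>E0. WW N a b e f * (m2 e f - m1 e * m1 f)) = WW N a b e e * v e" if e: "e \<in> E0" for e
  proof -
    have "(\<Sum>f\<in>E0. WW N a b e f * (m2 e f - m1 e * m1 f))
        = (\<Sum>f\<in>E0. if f = e then WW N a b e e * v e else 0)"
    proof (rule sum.cong[OF refl])
      fix f assume f: "f \<in> E0"
      show "WW N a b e f * (m2 e f - m1 e * m1 f) = (if f = e then WW N a b e e * v e else 0)"
      proof (cases "f = e")
        case True then show ?thesis using d[OF e] by (simp add: v_def algebra_simps)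
      next
        case False
        show ?thesis
        proof (cases "{fst e, snd e} = {fst f, snd f}")
          case True
          have "fst e \<noteq> fst f"
          proof
            assume h: "fst e = fst f"
            with True have "snd e = snd f"
              using e f no_loops by (metis doubleton_eq_iff prod.collapse)
            with h False show False by (simp add: prod_eq_iff)
          qed
          then show ?thesis using False WW_diff by simp
        next
          case False2: False
          show ?thesis using o[OF e f False2] False by simp
        qed
      qed
    qed
    also have "\<dots> = WW N a b e e * v e" using e fin by (simp add: sum.delta')
    finally show ?thesis .
  qed
  have "(\<Sum>e\<in>E0. \<Sum>f\<in>E0. WW N a b e f * m2 e f) - (\<Sum>e\<in>E0. \<Sum>f\<in>E0. WW N a b e f * (m1 e * m1 f))
      = (\<Sum>e\<in>E0. \<Sum>f\<in>E0. WW N a b e f * (m2 e f - m1 e * m1 f))"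
    by (simp add: sum_subtractf algebra_simps)
  also have "\<dots> = (\<Sum>e\<in>E0. WW N a b e e * v e)"
    using inner by simp
  also have "\<dots> = (\<Sum>e\<in>E0. v e * (((if fst e = a then 1 else 0) - (if snd e = a then 1 else 0))
                       * ((if fst e = b then 1 else 0) - (if snd e = b then 1 else 0))))"
  proof (rule sum.cong[OF refl])
    fix e assume e: "e \<in> E0"
    have "fst e \<in> {1..N}" using e E0_sub by auto
    moreover have "fst e \<noteq> snd e" using e no_loops by (metis prod.collapse)
    ultimately show "WW N a b e e * v e = v e * (((if fst e = a then 1 else 0) - (if snd e = a then 1 else 0))
                       * ((if fst e = b then 1 else 0) - (if snd e = b then 1 else 0)))"
      by (simp add: WW_diag)
  qed
  also have "\<dots> = var_mat N E0 v a b + var_mat_transp N E0 v a b"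
  proof (cases "a = b")
    case True
    have "(\<Sum>e\<in>E0. v e * (((if fst e = a then 1 else 0) - (if snd e = a then 1 else 0))
                       * ((if fst e = b then 1 else 0) - (if snd e = b then 1 else 0))))
        = (\<Sum>e\<in>E0. (if fst e = a then v e else 0)) + (\<Sum>e\<in>E0. (if snd e = a then v e else 0))"
      unfolding sum.distrib[symmetric]
    proof (rule sum.cong[OF refl])
      fix e assume e: "e \<in> E0"
      have "fst e \<noteq> snd e" using e no_loops by (metis prod.collapse)
      then show "v e * (((if fst e = a then 1 else 0) - (if snd e = a then 1 else 0))
                       * ((if fst e = b then 1 else 0) - (if snd e = b then 1 else 0)))
          = (if fst e = a then v e else 0) + (if snd e = a then v e else 0)"
        using True by auto
    qed
    also have "(\<Sum>e\<in>E0. (if fst e = a then v e else 0)) = var_mat N E0 v a b"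
    proof -
      have "(\<Sum>e\<in>E0. (if fst e = a then v e else 0)) = (\<Sum>e\<in>{e\<in>E0. fst e = a}. v e)"
        using fin by (simp add: sum.inter_filter)
      also have "\<dots> = (\<Sum>r\<in>{r \<in> {1..N}. (a, r) \<in> E0}. v (a, r))"
      proof (rule sum.reindex_bij_betw[symmetric])
        show "bij_betw (\<lambda>r. (a, r)) {r \<in> {1..N}. (a, r) \<in> E0} {e \<in> E0. fst e = a}"
          using E0_sub by (auto simp: bij_betw_def inj_on_def image_def)
      qed
      finally show ?thesis using True by (simp add: var_mat_def)
    qed
    also have "(\<Sum>e\<in>E0. (if snd e = a then v e else 0)) = var_mat_transp N E0 v a b"
    proof -
      have "(\<Sum>e\<in>E0. (if snd e = a then v e else 0)) = (\<Sum>e\<in>{e\<in>E0. snd e = a}. v e)"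
        using fin by (simp add: sum.inter_filter)
      also have "\<dots> = (\<Sum>r\<in>{r \<in> {1..N}. (r, a) \<in> E0}. v (r, a))"
      proof (rule sum.reindex_bij_betw[symmetric])
        show "bij_betw (\<lambda>r. (r, a)) {r \<in> {1..N}. (r, a) \<in> E0} {e \<in> E0. snd e = a}"
          using E0_sub by (auto simp: bij_betw_def inj_on_def image_def)
      qed
      finally show ?thesis using True by (simp add: var_mat_transp_def)
    qed
    finally show ?thesis .
  next
    case False
    have "(\<Sum>e\<in>E0. v e * (((if fst e = a then 1 else 0) - (if snd e = a then 1 else 0))
                       * ((if fst e = b then 1 else 0) - (if snd e = b then 1 else 0))))
        = (\<Sum>e\<in>E0. (if e = (a, b) then - v e else 0)) + (\<Sum>e\<in>E0. (if e = (b, a) then - v e else 0))"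
      unfolding sum.distrib[symmetric]
    proof (rule sum.cong[OF refl])
      fix e assume e: "e \<in> E0"
      have "fst e \<noteq> snd e" using e no_loops by (metis prod.collapse)
      then show "v e * (((if fst e = a then 1 else 0) - (if snd e = a then 1 else 0))
                       * ((if fst e = b then 1 else 0) - (if snd e = b then 1 else 0)))
          = (if e = (a, b) then - v e else 0) + (if e = (b, a) then - v e else 0)"
        using False by (cases e) auto
    qed
    also have "\<dots> = var_mat N E0 v a b + var_mat_transp N E0 v a b"
      using False fin by (simp add: sum.delta' var_mat_def var_mat_transp_def)
    finally show ?thesis .
  qed
  finally show ?thesis unfolding v_def by simp
qed



lemma indep_prod_integral:
  fixes G :: "'c \<Rightarrow> real" and H :: "'c \<Rightarrow> real" and M :: "'a measure"
  assumes P: "prob_space M" and IV: "prob_space.indep_var M N1 Y N2 Z"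
    and G: "G \<in> borel_measurable N1" and H: "H \<in> borel_measurable N2"
    and Gb: "\<And>x. \<bar>G x\<bar> \<le> 1" and Hb: "\<And>x. \<bar>H x\<bar> \<le> 1"
  shows "(\<integral>\<omega>. G (Y \<omega>) * H (Z \<omega>) \<partial>M) = (\<integral>\<omega>. G (Y \<omega>) \<partial>M) * (\<integral>\<omega>. H (Z \<omega>) \<partial>M)"
proof -
  interpret prob_space M by fact
  have Y: "Y \<in> measurable M N1" using IV by (rule indep_var_rv1)
  have Z: "Z \<in> measurable M N2" using IV by (rule indep_var_rv2)
  have iv: "indep_var borel (G \<circ> Y) borel (H \<circ> Z)" by (rule indep_var_compose[OF IV G H])
  have i1: "integrable M (G \<circ> Y)"
    by (rule integrable_const_bound[where B=1]) (auto simp: Gb intro: measurable_comp[OF Y G])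
  have i2: "integrable M (H \<circ> Z)"
    by (rule integrable_const_bound[where B=1]) (auto simp: Hb intro: measurable_comp[OF Z H])
  show ?thesis using indep_var_lebesgue_integral[OF iv i1 i2] by (simp add: comp_def)
qed

definition ind :: "bool \<Rightarrow> real" where "ind P = (if P then 1 else 0)"

lemma ind_meas[measurable]: "Measurable.pred N P \<Longrightarrow> (\<lambda>x. ind (P x)) \<in> borel_measurable N"
  unfolding ind_def by measurable

lemma abs_ind[simp]: "\<bar>ind P\<bar> \<le> 1" by (simp add: ind_def)

lemma pred_comp_eq: "f \<in> borel_measurable N \<Longrightarrow> Measurable.pred N (\<lambda>x. f x = (c::real))"
  by measurable

lemma comp_meas:
  assumes "v \<in> R"
  shows "(\<lambda>z. z v i) \<in> borel_measurable (PiM R (\<lambda>_. PiM UNIV (\<lambda>_. (borel :: real measure))))"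
proof -
  have "(\<lambda>z. z v) \<in> measurable (PiM R (\<lambda>_. PiM UNIV (\<lambda>_. (borel :: real measure)))) (PiM UNIV (\<lambda>_. borel))"
    using measurable_component_singleton[OF assms, of "\<lambda>_. PiM UNIV (\<lambda>_. (borel :: real measure))"] by simp
  moreover have "(\<lambda>x. x i) \<in> measurable (PiM UNIV (\<lambda>_. (borel :: real measure))) borel"
    by (rule measurable_component_singleton) simp
  ultimately show ?thesis by (rule measurable_compose)
qed


lemma PROB:
  fixes M :: "'a measure" and N :: nat and E0 :: "(nat \<times> nat) set"
    and \<theta> :: "nat \<times> nat \<Rightarrow> nat \<Rightarrow> 'a \<Rightarrow> real"
    and k :: nat and s :: "nat \<times> nat \<Rightarrow> real"
  assumes prob: "prob_space M"
    and E0_sub: "E0 \<subseteq> {1..N} \<times> {1..N}"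
    and meas: "\<forall>e n. \<theta> e n \<in> borel_measurable M"
    and binary: "\<forall>e n \<omega>. \<omega> \<in> space M \<longrightarrow> \<theta> e n \<omega> \<in> {0, 1}"
    and indep: "prob_space.indep_vars M (\<lambda>_. PiM UNIV (\<lambda>_. borel))
        (\<lambda>u \<omega>. \<lambda>((i, j), n). if (i, j) \<in> E0 \<and> {i, j} = u then \<theta> (i, j) n \<omega> else 0)
        {u. \<exists>(i, j)\<in>E0. u = {i, j}}"
    and pos: "measure M (state_event M E0 \<theta> k s) > 0"
    and e: "e \<in> E0" and f: "f \<in> E0" and ne: "{fst e, snd e} \<noteq> {fst f, snd f}"
  shows "cexp M (\<lambda>\<omega>. \<theta> e (Suc k) \<omega> * \<theta> f (Suc k) \<omega>) (state_event M E0 \<theta> k s)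
        = cexp M (\<theta> e (Suc k)) (state_event M E0 \<theta> k s) * cexp M (\<theta> f (Suc k)) (state_event M E0 \<theta> k s)"
proof -
  interpret prob_space M by fact
  define A where "A = state_event M E0 \<theta> k s"
  define pr :: "nat \<times> nat \<Rightarrow> nat set" where "pr x = {fst x, snd x}" for x
  define U where "U = {u. \<exists>(i, j)\<in>E0. u = {i, j}}"
  define X where "X = (\<lambda>u \<omega>. \<lambda>((i, j), n). if (i, j) \<in> E0 \<and> {i, j} = u then \<theta> (i, j) n \<omega> else 0)"
  define u where "u = pr e"
  define R where "R = U - {u}"
  have IV0: "indep_vars (\<lambda>_. PiM UNIV (\<lambda>_. borel)) X U" using indep unfolding X_def U_def .
  have prU: "pr x \<in> U" if "x \<in> E0" for x using that by (cases x) (auto simp: pr_def U_def)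
  have uU: "u \<in> U" using prU[OF e] by (simp add: u_def)
  define Y where "Y \<omega> = restrict (\<lambda>i. X i \<omega>) {u}" for \<omega>
  define Z where "Z \<omega> = restrict (\<lambda>i. X i \<omega>) R" for \<omega>
  have IV: "indep_var (PiM {u} (\<lambda>_. PiM UNIV (\<lambda>_. borel))) Y (PiM R (\<lambda>_. PiM UNIV (\<lambda>_. borel))) Z"
    unfolding Y_def Z_def by (rule indep_var_restrict[OF IV0]) (auto simp: R_def uU)
  have fin: "finite E0" using E0_sub finite_subset by blast
  have Ane: "A \<noteq> {}" using pos unfolding A_def by auto
  then obtain \<omega>0 where \<omega>0: "\<omega>0 \<in> A" by blast
  have sE: "s x = 0" if "x \<notin> E0" for x
  proof -
    have "edge_state E0 \<theta> k \<omega>0 = s" using \<omega>0 by (simp add: A_def state_event_def)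
    then have "edge_state E0 \<theta> k \<omega>0 x = s x" by simp
    then show ?thesis using that by (simp add: edge_state_def)
  qed
  have Aiff: "(\<omega> \<in> A) = (\<forall>x\<in>E0. \<theta> x k \<omega> = s x)" if "\<omega> \<in> space M" for \<omega>
    using that sE unfolding A_def state_event_def edge_state_def by (auto simp: fun_eq_iff)
  have Xv: "X v \<omega> (x, n) = \<theta> x n \<omega>" if "x \<in> E0" "pr x = v" for \<omega> x n v
    using that by (cases x) (auto simp: X_def pr_def)
  have prR: "pr x \<in> R" if "x \<in> E0" "pr x \<noteq> u" for x using that prU by (auto simp: R_def)
  have fR: "pr f \<in> R" using prR[OF f] ne by (simp add: u_def pr_def)
  define g0 where "g0 z = ind (\<forall>x\<in>{x\<in>E0. pr x = u}. z u (x, k) = s x)"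
    for z :: "nat set \<Rightarrow> (nat \<times> nat) \<times> nat \<Rightarrow> real"
  define g1 where "g1 z = g0 z * ind (z u (e, Suc k) = 1)" for z :: "nat set \<Rightarrow> (nat \<times> nat) \<times> nat \<Rightarrow> real"
  define h0 where "h0 z = ind (\<forall>x\<in>{x\<in>E0. pr x \<noteq> u}. z (pr x) (x, k) = s x)"
    for z :: "nat set \<Rightarrow> (nat \<times> nat) \<times> nat \<Rightarrow> real"
  define h1 where "h1 z = h0 z * ind (z (pr f) (f, Suc k) = 1)" for z :: "nat set \<Rightarrow> (nat \<times> nat) \<times> nat \<Rightarrow> real"
  have g0Y: "g0 (Y \<omega>) = ind (\<forall>x\<in>{x\<in>E0. pr x = u}. \<theta> x k \<omega> = s x)" for \<omega>
  proof -
    have "(\<forall>x\<in>{x\<in>E0. pr x = u}. Y \<omega> u (x, k) = s x) = (\<forall>x\<in>{x\<in>E0. pr x = u}. \<theta> x k \<omega> = s x)"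
      using Xv by (auto simp: Y_def)
    then show ?thesis by (simp add: g0_def)
  qed
  have h0Z: "h0 (Z \<omega>) = ind (\<forall>x\<in>{x\<in>E0. pr x \<noteq> u}. \<theta> x k \<omega> = s x)" for \<omega>
  proof -
    have "(\<forall>x\<in>{x\<in>E0. pr x \<noteq> u}. Z \<omega> (pr x) (x, k) = s x) = (\<forall>x\<in>{x\<in>E0. pr x \<noteq> u}. \<theta> x k \<omega> = s x)"
      using Xv prR by (auto simp: Z_def)
    then show ?thesis by (simp add: h0_def)
  qed
  have bin1: "ind (\<theta> x n \<omega> = 1) = \<theta> x n \<omega>" if "\<omega> \<in> space M" for x n \<omega>
    using binary[rule_format, OF that, of x n] by (auto simp: ind_def)
  have eY: "Y \<omega> u (e, Suc k) = \<theta> e (Suc k) \<omega>" for \<omega>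
    using Xv[OF e] by (simp add: Y_def u_def)
  have fZ: "Z \<omega> (pr f) (f, Suc k) = \<theta> f (Suc k) \<omega>" for \<omega>
    using Xv[OF f] fR by (simp add: Z_def)
  have indA: "indicator A \<omega> = g0 (Y \<omega>) * h0 (Z \<omega>)" if "\<omega> \<in> space M" for \<omega>
    using Aiff[OF that] unfolding g0Y h0Z by (auto simp: ind_def indicator_def)
  have mg0: "g0 \<in> borel_measurable (PiM {u} (\<lambda>_. PiM UNIV (\<lambda>_. borel)))"
    unfolding g0_def
    by (intro ind_meas pred_intros_finite(3) pred_comp_eq comp_meas) (auto simp: fin)
  have mg1: "g1 \<in> borel_measurable (PiM {u} (\<lambda>_. PiM UNIV (\<lambda>_. borel)))"
    unfolding g1_def
    by (intro borel_measurable_times mg0 ind_meas pred_comp_eq comp_meas) auto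
  have mh0: "h0 \<in> borel_measurable (PiM R (\<lambda>_. PiM UNIV (\<lambda>_. borel)))"
    unfolding h0_def
    by (intro ind_meas pred_intros_finite(3) pred_comp_eq comp_meas) (auto simp: fin prR)
  have mh1: "h1 \<in> borel_measurable (PiM R (\<lambda>_. PiM UNIV (\<lambda>_. borel)))"
    unfolding h1_def
    by (intro borel_measurable_times mh0 ind_meas pred_comp_eq comp_meas fR)
  have bg0: "\<bar>g0 z\<bar> \<le> 1" for z by (simp add: g0_def)
  have bg1: "\<bar>g1 z\<bar> \<le> 1" for z by (simp add: g1_def abs_mult ind_def g0_def)
  have bh0: "\<bar>h0 z\<bar> \<le> 1" for z by (simp add: h0_def)
  have bh1: "\<bar>h1 z\<bar> \<le> 1" for z by (simp add: h1_def abs_mult ind_def h0_def)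
  note IP = indep_prod_integral[OF prob IV]
  have I11: "(\<integral>\<omega>. indicator A \<omega> * (\<theta> e (Suc k) \<omega> * \<theta> f (Suc k) \<omega>) \<partial>M)
      = (\<integral>\<omega>. g1 (Y \<omega>) \<partial>M) * (\<integral>\<omega>. h1 (Z \<omega>) \<partial>M)"
  proof -
    have "(\<integral>\<omega>. indicator A \<omega> * (\<theta> e (Suc k) \<omega> * \<theta> f (Suc k) \<omega>) \<partial>M) = (\<integral>\<omega>. g1 (Y \<omega>) * h1 (Z \<omega>) \<partial>M)"
      by (rule Bochner_Integration.integral_cong[OF refl]) (simp add: indA g1_def h1_def eY fZ bin1)
    also have "\<dots> = (\<integral>\<omega>. g1 (Y \<omega>) \<partial>M) * (\<integral>\<omega>. h1 (Z \<omega>) \<partial>M)" by (rule IP[OF mg1 mh1 bg1 bh1])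
    finally show ?thesis .
  qed
  have I10: "(\<integral>\<omega>. indicator A \<omega> * \<theta> e (Suc k) \<omega> \<partial>M)
      = (\<integral>\<omega>. g1 (Y \<omega>) \<partial>M) * (\<integral>\<omega>. h0 (Z \<omega>) \<partial>M)"
  proof -
    have "(\<integral>\<omega>. indicator A \<omega> * \<theta> e (Suc k) \<omega> \<partial>M) = (\<integral>\<omega>. g1 (Y \<omega>) * h0 (Z \<omega>) \<partial>M)"
      by (rule Bochner_Integration.integral_cong[OF refl]) (simp add: indA g1_def eY bin1)
    also have "\<dots> = (\<integral>\<omega>. g1 (Y \<omega>) \<partial>M) * (\<integral>\<omega>. h0 (Z \<omega>) \<partial>M)" by (rule IP[OF mg1 mh0 bg1 bh0])
    finally show ?thesis .
  qed
  have I01: "(\<integral>\<omega>. indicator A \<omega> * \<theta> f (Suc k) \<omega> \<partial>M)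
      = (\<integral>\<omega>. g0 (Y \<omega>) \<partial>M) * (\<integral>\<omega>. h1 (Z \<omega>) \<partial>M)"
  proof -
    have "(\<integral>\<omega>. indicator A \<omega> * \<theta> f (Suc k) \<omega> \<partial>M) = (\<integral>\<omega>. g0 (Y \<omega>) * h1 (Z \<omega>) \<partial>M)"
      by (rule Bochner_Integration.integral_cong[OF refl]) (simp add: indA h1_def fZ bin1)
    also have "\<dots> = (\<integral>\<omega>. g0 (Y \<omega>) \<partial>M) * (\<integral>\<omega>. h1 (Z \<omega>) \<partial>M)" by (rule IP[OF mg0 mh1 bg0 bh1])
    finally show ?thesis .
  qed
  have Asub: "A \<subseteq> space M" by (auto simp: A_def state_event_def)
  have I00: "measure M A = (\<integral>\<omega>. g0 (Y \<omega>) \<partial>M) * (\<integral>\<omega>. h0 (Z \<omega>) \<partial>M)"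
  proof -
    have "measure M A = (\<integral>\<omega>. indicator A \<omega> \<partial>M)" using Asub by (simp add: Int_absorb2)
    also have "\<dots> = (\<integral>\<omega>. g0 (Y \<omega>) * h0 (Z \<omega>) \<partial>M)"
      by (rule Bochner_Integration.integral_cong[OF refl]) (simp add: indA)
    also have "\<dots> = (\<integral>\<omega>. g0 (Y \<omega>) \<partial>M) * (\<integral>\<omega>. h0 (Z \<omega>) \<partial>M)" by (rule IP[OF mg0 mh0 bg0 bh0])
    finally show ?thesis .
  qed
  have P0: "measure M A \<noteq> 0" using pos by (simp add: A_def)
  show ?thesis
    unfolding A_def[symmetric] cexp_def I11 I10 I01
    using P0 unfolding I00 by (simp add: field_simps)
qed


lemma sum01_card:
  fixes g :: "'b \<Rightarrow> real"
  assumes "finite S" "\<And>x. x \<in> S \<Longrightarrow> g x \<in> {0, 1}"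
  shows "(\<Sum>x\<in>S. g x) = real (card {x\<in>S. g x = 1})"
proof -
  have "(\<Sum>x\<in>S. g x) = (\<Sum>x\<in>S. if g x = 1 then 1 else 0)"
    using assms(2) by (intro sum.cong) auto
  also have "\<dots> = (\<Sum>x\<in>{x\<in>S. g x = 1}. 1)"
    using assms(1) by (rule sum.inter_filter[symmetric])
  finally show ?thesis by simp
qed

lemma Lrep:
  fixes E0 :: "(nat \<times> nat) set" and t :: "nat \<times> nat \<Rightarrow> real"
  assumes E0_sub: "E0 \<subseteq> {1..N} \<times> {1..N}"
    and no_loops: "\<forall>i. (i, i) \<notin> E0"
    and bin: "\<And>x. t x \<in> {0, 1}"
  shows "laplacian N {e \<in> E0. t e = 1} i j = (\<Sum>e\<in>E0. ww i j e * t e)"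
proof -
  have fin: "finite E0" using E0_sub finite_subset by blast
  show ?thesis
  proof (cases "i = j")
    case True
    have "(\<Sum>e\<in>E0. ww i j e * t e) = (\<Sum>e\<in>E0. if fst e = i then t e else 0)"
    proof (rule sum.cong[OF refl])
      fix e assume "e \<in> E0"
      then have "e \<noteq> (i, i)" using no_loops by auto
      then show "ww i j e * t e = (if fst e = i then t e else 0)" using True by (simp add: ww_def)
    qed
    also have "\<dots> = (\<Sum>e\<in>{e\<in>E0. fst e = i}. t e)" using fin by (simp add: sum.inter_filter)
    also have "\<dots> = real (card {e\<in>{e\<in>E0. fst e = i}. t e = 1})"
      using fin bin by (intro sum01_card) auto
    also have "card {e\<in>{e\<in>E0. fst e = i}. t e = 1} = card {l \<in> {1..N}. l \<noteq> i \<and> (i, l) \<in> {e \<in> E0. t e = 1}}"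
    proof (rule bij_betw_same_card[symmetric])
      show "bij_betw (\<lambda>l. (i, l)) {l \<in> {1..N}. l \<noteq> i \<and> (i, l) \<in> {e \<in> E0. t e = 1}} {e\<in>{e\<in>E0. fst e = i}. t e = 1}"
        unfolding bij_betw_def inj_on_def
      proof (intro conjI ballI impI)
        show "(\<lambda>l. (i, l)) ` {l \<in> {1..N}. l \<noteq> i \<and> (i, l) \<in> {e \<in> E0. t e = 1}} = {e\<in>{e\<in>E0. fst e = i}. t e = 1}"
        proof
          show "{e\<in>{e\<in>E0. fst e = i}. t e = 1} \<subseteq> (\<lambda>l. (i, l)) ` {l \<in> {1..N}. l \<noteq> i \<and> (i, l) \<in> {e \<in> E0. t e = 1}}"
          proof
            fix e assume e: "e \<in> {e\<in>{e\<in>E0. fst e = i}. t e = 1}"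
            obtain x y where xy: "e = (x, y)" by (cases e)
            have "y \<in> {1..N}" using e xy E0_sub by auto
            moreover have "y \<noteq> i" using e xy no_loops by auto
            ultimately show "e \<in> (\<lambda>l. (i, l)) ` {l \<in> {1..N}. l \<noteq> i \<and> (i, l) \<in> {e \<in> E0. t e = 1}}"
              using e xy by (auto simp: image_def)
          qed
        qed auto
      qed auto
    qed
    finally show ?thesis using True by (simp add: laplacian_def)
  next
    case False
    have "(\<Sum>e\<in>E0. ww i j e * t e) = (\<Sum>e\<in>E0. if e = (i, j) then - t e else 0)"
      by (rule sum.cong[OF refl]) (use False in \<open>auto simp: ww_def\<close>)
    also have "\<dots> = (if (i, j) \<in> E0 then - t (i, j) else 0)" using fin by (simp add: sum.delta')
    finally show ?thesis using False bin[of "(i, j)"] by (auto simp: laplacian_def)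
  qed
qed

lemma cexp_cong:
  assumes "A \<subseteq> space M" "\<And>\<omega>. \<omega> \<in> space M \<Longrightarrow> X \<omega> = Y \<omega>"
  shows "cexp M X A = cexp M Y A"
  unfolding cexp_def using assms by (simp cong: Bochner_Integration.integral_cong)

lemma cexp_sum:
  assumes "finite I" "\<And>i. i \<in> I \<Longrightarrow> integrable M (\<lambda>\<omega>. indicator A \<omega> * g i \<omega>)"
  shows "cexp M (\<lambda>\<omega>. \<Sum>i\<in>I. (c i :: real) * g i \<omega>) A = (\<Sum>i\<in>I. c i * cexp M (g i) A)"
proof -
  have "(\<integral>\<omega>. indicator A \<omega> * (\<Sum>i\<in>I. c i * g i \<omega>) \<partial>M) = (\<integral>\<omega>. (\<Sum>i\<in>I. c i * (indicator A \<omega> * g i \<omega>)) \<partial>M)"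
    by (simp add: sum_distrib_left algebra_simps)
  also have "\<dots> = (\<Sum>i\<in>I. c i * (\<integral>\<omega>. indicator A \<omega> * g i \<omega> \<partial>M))"
    using assms by (simp add: integral_sum)
  finally show ?thesis unfolding cexp_def by (simp add: sum_divide_distrib)
qed

theorem lemma1:
  fixes M :: "'a measure" and N :: nat and E0 :: "(nat \<times> nat) set"
    and \<theta> :: "nat \<times> nat \<Rightarrow> nat \<Rightarrow> 'a \<Rightarrow> real"
    and p q \<eta> :: "nat \<times> nat \<Rightarrow> real"
    and k :: nat and s :: "nat \<times> nat \<Rightarrow> real"
  assumes prob: "prob_space M"
    and E0_sub: "E0 \<subseteq> {1..N} \<times> {1..N}"
    and no_loops: "\<forall>i. (i, i) \<notin> E0"
    and meas: "\<forall>e n. \<theta> e n \<in> borel_measurable M"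
    and binary: "\<forall>e n \<omega>. \<omega> \<in> space M \<longrightarrow> \<theta> e n \<omega> \<in> {0, 1}"
    and params: "\<forall>e\<in>E0. p e \<in> {0..1} \<and> q e \<in> {0..1} \<and> \<eta> e \<in> {0..1}"
    and init: "\<forall>e\<in>E0. measure M {\<omega> \<in> space M. \<theta> e 0 \<omega> = 1} = \<eta> e"
    and markov: "\<forall>n (ss :: nat \<Rightarrow> nat \<times> nat \<Rightarrow> real) s'.
        measure M {\<omega> \<in> space M. (\<forall>j\<le>n. edge_state E0 \<theta> j \<omega> = ss j) \<and> edge_state E0 \<theta> (Suc n) \<omega> = s'}
          * measure M {\<omega> \<in> space M. edge_state E0 \<theta> n \<omega> = ss n}
        = measure M {\<omega> \<in> space M. \<forall>j\<le>n. edge_state E0 \<theta> j \<omega> = ss j}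
          * measure M {\<omega> \<in> space M. edge_state E0 \<theta> n \<omega> = ss n \<and> edge_state E0 \<theta> (Suc n) \<omega> = s'}"
    and trans: "\<forall>n s' e. e \<in> E0 \<longrightarrow>
        measure M {\<omega> \<in> space M. edge_state E0 \<theta> n \<omega> = s' \<and> \<theta> e (Suc n) \<omega> = 1}
        = (if s' e = 1 then p e else q e) * measure M {\<omega> \<in> space M. edge_state E0 \<theta> n \<omega> = s'}"
    and indep: "prob_space.indep_vars M (\<lambda>_. PiM UNIV (\<lambda>_. borel))
        (\<lambda>u \<omega>. \<lambda>((i, j), n). if (i, j) \<in> E0 \<and> {i, j} = u then \<theta> (i, j) n \<omega> else 0)
        {u. \<exists>(i, j)\<in>E0. u = {i, j}}"
    and pos: "measure M (state_event M E0 \<theta> k s) > 0"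
  shows "\<forall>a\<in>{1..N}. \<forall>b\<in>{1..N}.
     cexp M (\<lambda>\<omega>. mmult N (mtrans (laplacian N (rand_edges E0 \<theta> (Suc k) \<omega>)))
                           (laplacian N (rand_edges E0 \<theta> (Suc k) \<omega>)) a b)
            (state_event M E0 \<theta> k s)
     = mmult N (mtrans (\<lambda>i j. cexp M (\<lambda>\<omega>. laplacian N (rand_edges E0 \<theta> (Suc k) \<omega>) i j) (state_event M E0 \<theta> k s)))
               (\<lambda>i j. cexp M (\<lambda>\<omega>. laplacian N (rand_edges E0 \<theta> (Suc k) \<omega>) i j) (state_event M E0 \<theta> k s)) a b
       + var_mat N E0 (cond_var_edge M E0 \<theta> k s) a b
       + var_mat_transp N E0 (cond_var_edge M E0 \<theta> k s) a b"

proof (intro ballI)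
  fix a b assume a: "a \<in> {1..N}" and b: "b \<in> {1..N}"
  interpret prob_space M by fact
  define A where "A = state_event M E0 \<theta> k s"
  have Asub: "A \<subseteq> space M" by (auto simp: A_def state_event_def)
  have Ameas: "A \<in> sets M"
    using pos measure_notin_sets[of A M] unfolding A_def by force
  have fin: "finite E0" using E0_sub finite_subset by blast
  define T where "T e \<omega> = \<theta> e (Suc k) \<omega>" for e \<omega>
  define m1 where "m1 e = cexp M (T e) A" for e
  define m2 where "m2 e f = cexp M (\<lambda>\<omega>. T e \<omega> * T f \<omega>) A" for e f
  have Tbin: "T e \<omega> \<in> {0, 1}" if "\<omega> \<in> space M" for e \<omega> using binary[rule_format, OF that, of e "Suc k"] by (simp add: T_def)
  have rand: "rand_edges E0 \<theta> (Suc k) \<omega> = {e \<in> E0. T e \<omega> = 1}" for \<omega>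
    by (simp add: rand_edges_def T_def)
  have Lr: "laplacian N (rand_edges E0 \<theta> (Suc k) \<omega>) i j = (\<Sum>e\<in>E0. ww i j e * T e \<omega>)"
    if "\<omega> \<in> space M" for \<omega> i j
    unfolding rand using Lrep[OF E0_sub no_loops Tbin[OF that]] .
  have intg: "integrable M (\<lambda>\<omega>. indicator A \<omega> * g \<omega>)"
    if "g \<in> borel_measurable M" "\<And>\<omega>. \<omega> \<in> space M \<Longrightarrow> \<bar>g \<omega>\<bar> \<le> 1" for g :: "'a \<Rightarrow> real"
  proof (rule integrable_const_bound[where B=1])
    show "AE x in M. norm (indicator A x * g x) \<le> (1::real)"
      using that(2) by (intro AE_I2) (auto simp: indicator_def)
    show "(\<lambda>\<omega>. indicator A \<omega> * g \<omega>) \<in> borel_measurable M"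
      using that(1) Ameas by measurable
  qed
  have Tm: "T e \<in> borel_measurable M" for e using meas unfolding T_def by blast
  have Tb: "\<bar>T e \<omega>\<bar> \<le> 1" if "\<omega> \<in> space M" for e \<omega> using Tbin[OF that, of e] by auto
  have int1: "integrable M (\<lambda>\<omega>. indicator A \<omega> * T e \<omega>)" for e
    by (rule intg[OF Tm Tb])
  have int2: "integrable M (\<lambda>\<omega>. indicator A \<omega> * (T e \<omega> * T f \<omega>))" for e f
    by (rule intg) (auto intro!: borel_measurable_times Tm simp: abs_mult Tb mult_le_one)
  have LHS: "cexp M (\<lambda>\<omega>. mmult N (mtrans (laplacian N (rand_edges E0 \<theta> (Suc k) \<omega>)))
                           (laplacian N (rand_edges E0 \<theta> (Suc k) \<omega>)) a b) A
      = (\<Sum>e\<in>E0. \<Sum>f\<in>E0. WW N a b e f * m2 e f)"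
  proof -
    have "cexp M (\<lambda>\<omega>. mmult N (mtrans (laplacian N (rand_edges E0 \<theta> (Suc k) \<omega>)))
                           (laplacian N (rand_edges E0 \<theta> (Suc k) \<omega>)) a b) A
        = cexp M (\<lambda>\<omega>. \<Sum>e\<in>E0. 1 * (\<Sum>f\<in>E0. WW N a b e f * (T e \<omega> * T f \<omega>))) A"
    proof (rule cexp_cong[OF Asub])
      fix \<omega> assume w: "\<omega> \<in> space M"
      have "mmult N (mtrans (laplacian N (rand_edges E0 \<theta> (Suc k) \<omega>))) (laplacian N (rand_edges E0 \<theta> (Suc k) \<omega>)) a b
          = (\<Sum>l\<in>{1..N}. (\<Sum>e\<in>E0. ww l a e * T e \<omega>) * (\<Sum>f\<in>E0. ww l b f * T f \<omega>))"
        by (simp only: mmult_def mtrans_def Lr[OF w])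
      also have "\<dots> = (\<Sum>e\<in>E0. \<Sum>f\<in>E0. WW N a b e f * (T e \<omega> * T f \<omega>))"
        by (rule rearr)
      finally show "mmult N (mtrans (laplacian N (rand_edges E0 \<theta> (Suc k) \<omega>))) (laplacian N (rand_edges E0 \<theta> (Suc k) \<omega>)) a b
          = (\<Sum>e\<in>E0. 1 * (\<Sum>f\<in>E0. WW N a b e f * (T e \<omega> * T f \<omega>)))" by simp
    qed
    also have "\<dots> = (\<Sum>e\<in>E0. 1 * cexp M (\<lambda>\<omega>. \<Sum>f\<in>E0. WW N a b e f * (T e \<omega> * T f \<omega>)) A)"
    proof (rule cexp_sum[OF fin])
      fix e
      have "(\<lambda>\<omega>. indicator A \<omega> * (\<Sum>f\<in>E0. WW N a b e f * (T e \<omega> * T f \<omega>)))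
          = (\<lambda>\<omega>. \<Sum>f\<in>E0. WW N a b e f * (indicator A \<omega> * (T e \<omega> * T f \<omega>)))"
        by (simp add: sum_distrib_left mult.left_commute)
      moreover have "integrable M (\<lambda>\<omega>. \<Sum>f\<in>E0. WW N a b e f * (indicator A \<omega> * (T e \<omega> * T f \<omega>)))"
        by (rule Bochner_Integration.integrable_sum, rule Bochner_Integration.integrable_mult_right, rule int2)
      ultimately show "integrable M (\<lambda>\<omega>. indicator A \<omega> * (\<Sum>f\<in>E0. WW N a b e f * (T e \<omega> * T f \<omega>)))"
        by simp
    qed
    also have "\<dots> = (\<Sum>e\<in>E0. \<Sum>f\<in>E0. WW N a b e f * m2 e f)"
      by (simp add: cexp_sum[OF fin] int2 m2_def)
    finally show ?thesis .
  qed
  have C: "cexp M (\<lambda>\<omega>. laplacian N (rand_edges E0 \<theta> (Suc k) \<omega>) i j) A = (\<Sum>e\<in>E0. ww i j e * m1 e)" for i j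
  proof -
    have "cexp M (\<lambda>\<omega>. laplacian N (rand_edges E0 \<theta> (Suc k) \<omega>) i j) A = cexp M (\<lambda>\<omega>. \<Sum>e\<in>E0. ww i j e * T e \<omega>) A"
      by (rule cexp_cong[OF Asub]) (simp add: Lr)
    also have "\<dots> = (\<Sum>e\<in>E0. ww i j e * m1 e)"
      by (simp add: cexp_sum[OF fin] int1 m1_def)
    finally show ?thesis .
  qed
  have RHS1: "mmult N (mtrans (\<lambda>i j. cexp M (\<lambda>\<omega>. laplacian N (rand_edges E0 \<theta> (Suc k) \<omega>) i j) A))
               (\<lambda>i j. cexp M (\<lambda>\<omega>. laplacian N (rand_edges E0 \<theta> (Suc k) \<omega>) i j) A) a b
      = (\<Sum>e\<in>E0. \<Sum>f\<in>E0. WW N a b e f * (m1 e * m1 f))"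
    unfolding mmult_def mtrans_def C by (rule rearr)
  have cv: "cond_var_edge M E0 \<theta> k s = (\<lambda>e. m1 e * (1 - m1 e))"
    by (simp add: fun_eq_iff cond_var_edge_def m1_def T_def[abs_def] A_def Let_def)
  have d: "m2 e e = m1 e" for e
    unfolding m2_def m1_def
  proof (rule cexp_cong[OF Asub])
    fix \<omega> assume "\<omega> \<in> space M"
    then show "T e \<omega> * T e \<omega> = T e \<omega>" using Tbin[of \<omega> e] by auto
  qed
  have o: "m2 e f = m1 e * m1 f" if "e \<in> E0" "f \<in> E0" "{fst e, snd e} \<noteq> {fst f, snd f}" for e f
    unfolding m2_def m1_def T_def A_def
    by (rule PROB[OF prob E0_sub meas binary indep pos that])
  show "cexp M (\<lambda>\<omega>. mmult N (mtrans (laplacian N (rand_edges E0 \<theta> (Suc k) \<omega>)))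
                           (laplacian N (rand_edges E0 \<theta> (Suc k) \<omega>)) a b)
            (state_event M E0 \<theta> k s)
     = mmult N (mtrans (\<lambda>i j. cexp M (\<lambda>\<omega>. laplacian N (rand_edges E0 \<theta> (Suc k) \<omega>) i j) (state_event M E0 \<theta> k s)))
               (\<lambda>i j. cexp M (\<lambda>\<omega>. laplacian N (rand_edges E0 \<theta> (Suc k) \<omega>) i j) (state_event M E0 \<theta> k s)) a b
       + var_mat N E0 (cond_var_edge M E0 \<theta> k s) a b
       + var_mat_transp N E0 (cond_var_edge M E0 \<theta> k s) a b"
    unfolding A_def[symmetric] LHS RHS1 cv
    by (rule ALG[OF E0_sub no_loops d o])
qed


end
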